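(* Suppose Assumption 1 holds, $f$ is convex, $F$ is $\mu$-optimal-set-strongly convex for some $\mu>0$, every $d^k$ in Algorithm 1 satisfies the $\eta$-inexactness condition for a fixed $\eta\in[0,1)$, and $\sigma I\preceq H_k\preceq MI$ for all $k$, for some $M\ge\sigma>0$. Then for all $k=0,1,2,\dots$, $$\frac{F(x^{k+1})-F^*}{F(x^k)-F^*}\le1-\frac{\alpha_k\gamma(1-\eta)\mu}{\mu+\|H_k\|}\le1-\frac{\gamma\mu}{\mu+M}\min\left\{1-\eta,\ \frac{2(1-\sqrt\eta)\beta(1-\gamma)\sigma}{L}\right\}.$$ Moreover, for every $k$ with $F(x^k)-F^*\ge(x^k-P_\Omega(x^k))^TH_k(x^k-P_\Omega(x^k))$, one also has $$\frac{F(x^{k+1})-F^*}{F(x^k)-F^*}\le1-\frac{(1-\eta)\gamma\alpha_k}{2}\le1-\frac\gamma2\min\left\{1-\eta,\ \frac{2(1-\sqrt\eta)\beta(1-\gamma)\sigma}{L}\right\}.$$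
   Context: Problem setting: $F(x)=f(x)+\psi(x)$ on $\mathbb{R}^n$, $F^*=\inf F$, $\Omega=\{x:F(x)=F^*\}$, $P_\Omega$ the Euclidean projection onto $\Omega$, $\|\cdot\|$ the Euclidean / spectral norm. Assumption 1: $f$ is differentiable with $L$-Lipschitz continuous gradient ($L>0$); $\psi:\mathbb{R}^n\to\mathbb{R}\cup\{+\infty\}$ is convex, proper and closed; $F$ is bounded below; $\Omega$ is nonempty. $F$ is $\mu$-optimal-set-strongly convex ($\mu\ge0$) if for all $x$ and all $\lambda\in[0,1]$: $F(\lambda x+(1-\lambda)P_\Omega(x))\le\lambda F(x)+(1-\lambda)F^*-\frac{\mu\lambda(1-\lambda)}2\|x-P_\Omega(x)\|^2$. For $x\in\mathbb{R}^n$ and symmetric $H$, $Q^x_H(d)\coloneqq\nabla f(x)^Td+\frac12d^THd+\psi(x+d)-\psi(x)$, $Q^*=\inf_dQ^x_H(d)$; $d$ satisfies the $\eta$-inexactness condition if $Q^x_H(d)\le(1-\eta)Q^*$. Algorithm 1: given $\beta,\gamma\in(0,1)$, $x^0$, fixed $\eta\in[0,1)$; for $k=0,1,\dots$: choose symmetric $H_k$ with $Q_k\coloneqq Q^{x^k}_{H_k}$ strongly convex; compute $d^k$ satisfying the $\eta$-inexactness condition for $Q_k$; let $\Delta_k=\nabla f(x^k)^Td^k+\psi(x^k+d^k)-\psi(x^k)$; let $\alpha_k=\beta^i$ for the smallest nonnegative integer $i$ with $F(x^k+\alpha_kd^k)\le F(x^k)+\alpha_k\gamma\Delta_k$; set $x^{k+1}=x^k+\alpha_kd^k$.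 *)

theory Defs
  imports "HOL-Analysis.Analysis" "HOL-Library.Extended_Real"
begin

definition ext_convex :: "('a::real_vector \<Rightarrow> ereal) \<Rightarrow> bool" where
  "ext_convex g \<longleftrightarrow> (\<forall>x y t. 0 \<le> t \<and> t \<le> 1 \<longrightarrow>
      g ((1 - t) *\<^sub>R x + t *\<^sub>R y) \<le> ereal (1 - t) * g x + ereal t * g y)"

definition ext_strongly_convex :: "('a::real_normed_vector \<Rightarrow> ereal) \<Rightarrow> bool" where
  "ext_strongly_convex g \<longleftrightarrow> (\<exists>c>0. \<forall>x y t. 0 \<le> t \<and> t \<le> 1 \<longrightarrow>
      g ((1 - t) *\<^sub>R x + t *\<^sub>R y) \<le> ereal (1 - t) * g x + ereal t * g y
        - ereal (c / 2 * t * (1 - t) * (norm (x - y))\<^sup>2))"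

definition ext_proper :: "('a \<Rightarrow> ereal) \<Rightarrow> bool" where
  "ext_proper g \<longleftrightarrow> (\<forall>x. g x \<noteq> -\<infinity>) \<and> (\<exists>x. g x \<noteq> \<infinity>)"

text \<open>Closed = lower semicontinuous = closed epigraph.\<close>
definition ext_closed :: "('a::topological_space \<Rightarrow> ereal) \<Rightarrow> bool" where
  "ext_closed g \<longleftrightarrow> closed {(x, t::real). g x \<le> ereal t}"

definition Fobj :: "('a \<Rightarrow> real) \<Rightarrow> ('a \<Rightarrow> ereal) \<Rightarrow> 'a \<Rightarrow> ereal" where
  "Fobj f \<psi> x = ereal (f x) + \<psi> x"

definition Fstar :: "('a \<Rightarrow> ereal) \<Rightarrow> ereal" where
  "Fstar F = Inf (range F)"

definition OptSet :: "('a \<Rightarrow> ereal) \<Rightarrow> 'a set" where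
  "OptSet F = {x. F x = Fstar F}"

definition opt_set_strongly_convex :: "real \<Rightarrow> ('a::euclidean_space \<Rightarrow> ereal) \<Rightarrow> bool" where
  "opt_set_strongly_convex \<mu> F \<longleftrightarrow> (\<forall>x l. 0 \<le> l \<and> l \<le> 1 \<longrightarrow>
     (let p = closest_point (OptSet F) x in
      F (l *\<^sub>R x + (1 - l) *\<^sub>R p) \<le> ereal l * F x + ereal (1 - l) * Fstar F
          - ereal (\<mu> * l * (1 - l) / 2 * (norm (x - p))\<^sup>2)))"

text \<open>The model Q^x_H(d), with gx = grad f(x).\<close>
definition Qmod :: "real^'n \<Rightarrow> ((real^'n) \<Rightarrow> ereal) \<Rightarrow> real^'n \<Rightarrow> real^'n^'n \<Rightarrow> real^'n \<Rightarrow> ereal" where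
  "Qmod gx \<psi> x H d = ereal (gx \<bullet> d + 1/2 * (d \<bullet> (H *v d))) + \<psi> (x + d) - \<psi> x"

definition inexact :: "real \<Rightarrow> ('a \<Rightarrow> ereal) \<Rightarrow> 'a \<Rightarrow> bool" where
  "inexact \<eta> Q d \<longleftrightarrow> Q d \<le> ereal (1 - \<eta>) * Inf (range Q)"

definition loewner_between :: "real \<Rightarrow> real^'n^'n \<Rightarrow> real \<Rightarrow> bool" where
  "loewner_between \<sigma> H M \<longleftrightarrow> (\<forall>v. \<sigma> * (norm v)\<^sup>2 \<le> v \<bullet> (H *v v) \<and> v \<bullet> (H *v v) \<le> M * (norm v)\<^sup>2)"

definition spec_norm :: "real^'n^'n \<Rightarrow> real" where
  "spec_norm H = onorm (\<lambda>v. H *v v)"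

end

theory Submission
  imports Defs
begin


lemma sym_inner:
  fixes H :: "real^'n^'n" assumes "transpose H = H"
  shows "u \<bullet> (H *v v) = (H *v u) \<bullet> v"
  by (metis assms dot_lmul_matrix vector_transpose_matrix)

lemma H_lin: "bounded_linear (\<lambda>v. (H::real^'n^'n) *v v)"
  by (simp add: matrix_vector_mul_bounded_linear)

lemma quad_le_spec:
  fixes H :: "real^'n^'n"
  shows "\<bar>v \<bullet> (H *v v)\<bar> \<le> spec_norm H * (norm v)\<^sup>2"
proof -
  have "\<bar>v \<bullet> (H *v v)\<bar> \<le> norm v * norm (H *v v)" by (rule Cauchy_Schwarz_ineq2)
  also have "\<dots> \<le> norm v * (spec_norm H * norm v)"
    unfolding spec_norm_def by (intro mult_left_mono onorm[OF H_lin]) auto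
  finally show ?thesis by (simp add: power2_eq_square mult_ac)
qed

lemma spec_nonneg: "0 \<le> spec_norm (H::real^'n^'n)"
  unfolding spec_norm_def by (rule onorm_pos_le[OF H_lin])

lemma psd_cs:
  fixes H :: "real^'n^'n"
  assumes sym: "transpose H = H" and psd: "\<And>w. 0 \<le> w \<bullet> (H *v w)"
  shows "(u \<bullet> (H *v v))\<^sup>2 \<le> (u \<bullet> (H *v u)) * (v \<bullet> (H *v v))"
proof -
  let ?a = "u \<bullet> (H *v u)" and ?b = "u \<bullet> (H *v v)" and ?c = "v \<bullet> (H *v v)"
  have q: "0 \<le> ?a + 2 * t * ?b + t\<^sup>2 * ?c" for t
  proof -
    have "0 \<le> (u + t *\<^sub>R v) \<bullet> (H *v (u + t *\<^sub>R v))" by (rule psd)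
    also have "\<dots> = ?a + t * (u \<bullet> (H *v v)) + t * (v \<bullet> (H *v u)) + t\<^sup>2 * ?c"
      by (simp add: matrix_vector_right_distrib matrix_vector_mult_scaleR inner_add_left inner_add_right power2_eq_square algebra_simps)
    also have "v \<bullet> (H *v u) = ?b" using sym_inner[OF sym, of v u] by (simp add: inner_commute)
    finally show ?thesis by (simp add: algebra_simps)
  qed
  show ?thesis
  proof (cases "?c = 0")
    case True
    have "?b = 0"
    proof (rule ccontr)
      assume nz: "?b \<noteq> 0"
      have "0 \<le> ?a + 2 * (- (?a + 1) / (2 * ?b)) * ?b" using q[of "- (?a + 1) / (2 * ?b)"] True by simp
      also have "\<dots> = -1" using nz by (simp add: field_simps)
      finally show False by simp
    qed
    then show ?thesis using True by simp
  next
    case False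
    then have cpos: "?c > 0" using psd[of v] by simp
    have "0 \<le> ?a + 2 * (- ?b / ?c) * ?b + (- ?b / ?c)\<^sup>2 * ?c" by (rule q)
    also have "\<dots> = ?a - ?b\<^sup>2 / ?c" using cpos by (simp add: field_simps power2_eq_square)
    finally show ?thesis using cpos by (simp add: field_simps)
  qed
qed

lemma spec_le_M:
  fixes H :: "real^'n^'n"
  assumes sym: "transpose H = H" and lb: "loewner_between \<sigma> H M" and s: "\<sigma> > 0"
  shows "spec_norm H \<le> M"
proof -
  have psd: "0 \<le> w \<bullet> (H *v w)" for w
    using lb s unfolding loewner_between_def by (meson order_trans mult_nonneg_nonneg less_imp_le zero_le_power2)
  have ub: "w \<bullet> (H *v w) \<le> M * (norm w)\<^sup>2" for w using lb unfolding loewner_between_def by auto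
  have v1: "(vec 1 :: real^'n) \<noteq> 0" by (simp add: vec_eq_iff)
  have "0 \<le> M * (norm (vec 1 :: real^'n))\<^sup>2" using ub[of "vec 1"] psd[of "vec 1"] by linarith
  then have M0: "0 \<le> M" using v1 by (simp add: zero_le_mult_iff)
  have "norm (H *v v) \<le> M * norm v" for v
  proof -
    let ?w = "H *v v"
    have "((norm ?w)\<^sup>2)\<^sup>2 = (?w \<bullet> (H *v v))\<^sup>2" by (simp add: power2_norm_eq_inner)
    also have "\<dots> \<le> (?w \<bullet> (H *v ?w)) * (v \<bullet> (H *v v))" by (rule psd_cs[OF sym psd])
    also have "\<dots> \<le> (M * (norm ?w)\<^sup>2) * (v \<bullet> (H *v v))" by (intro mult_right_mono ub psd)
    finally have 1: "((norm ?w)\<^sup>2)\<^sup>2 \<le> M * (norm ?w)\<^sup>2 * (v \<bullet> (H *v v))" .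
    have 2: "(norm ?w)\<^sup>2 \<le> M * (v \<bullet> (H *v v))"
    proof (cases "norm ?w = 0")
      case True then show ?thesis using M0 psd[of v] by simp
    next
      case False
      then have "(norm ?w)\<^sup>2 > 0" by simp
      then have p: "(norm ?w)\<^sup>2 > 0" by simp
      from 1 have "(norm ?w)\<^sup>2 * (norm ?w)\<^sup>2 \<le> (M * (v \<bullet> (H *v v))) * (norm ?w)\<^sup>2"
        by (simp add: power2_eq_square[of "(norm ?w)\<^sup>2"] mult_ac)
      then show ?thesis using p by (rule mult_right_le_imp_le)
    qed
    also have "\<dots> \<le> M * (M * (norm v)\<^sup>2)" by (intro mult_left_mono ub M0)
    finally have "(norm ?w)\<^sup>2 \<le> (M * norm v)\<^sup>2" by (simp add: power2_eq_square mult_ac)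
    then show ?thesis using M0 by (simp add: power2_le_iff_abs_le)
  qed
  then show ?thesis unfolding spec_norm_def by (rule onorm_le)
qed


lemma line_deriv:
  fixes f :: "real^'n \<Rightarrow> real"
  assumes grad: "\<And>y. GDERIV f y :> gradf y"
  shows "((\<lambda>t. f (x + t *\<^sub>R e)) has_real_derivative (e \<bullet> gradf (x + t *\<^sub>R e))) (at t)"
proof -
  have l: "((\<lambda>t. x + t *\<^sub>R e) has_derivative (\<lambda>t. t *\<^sub>R e)) (at t)"
    by (auto intro!: derivative_eq_intros)
  have g: "(f has_derivative (\<lambda>h. h \<bullet> gradf (x + t *\<^sub>R e))) (at (x + t *\<^sub>R e))"
    using grad unfolding gderiv_def by simp
  have "((\<lambda>t. f (x + t *\<^sub>R e)) has_derivative (\<lambda>h. (h *\<^sub>R e) \<bullet> gradf (x + t *\<^sub>R e))) (at t)"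
    using has_derivative_compose[OF l g] by (simp add: o_def)
  moreover have "(\<lambda>h. (h *\<^sub>R e) \<bullet> gradf (x + t *\<^sub>R e)) = (*) (e \<bullet> gradf (x + t *\<^sub>R e))"
    by (auto simp: fun_eq_iff)
  ultimately show ?thesis unfolding has_field_derivative_def by simp
qed

lemma grad_ineq:
  fixes f :: "real^'n \<Rightarrow> real"
  assumes grad: "\<And>y. GDERIV f y :> gradf y" and cvx: "convex_on UNIV f"
  shows "f x + gradf x \<bullet> e \<le> f (x + e)"
proof -
  let ?phi = "\<lambda>t::real. f (x + t *\<^sub>R e)"
  have c: "convex_on UNIV ?phi"
  proof (rule convex_onI)
    fix t u :: real and s :: real assume "0 < s" "s < 1"
    have "x + ((1 - s) * t + s * u) *\<^sub>R e = (1 - s) *\<^sub>R (x + t *\<^sub>R e) + s *\<^sub>R (x + u *\<^sub>R e)"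
      by (simp add: algebra_simps)
    then show "?phi ((1 - s) *\<^sub>R t + s *\<^sub>R u) \<le> (1 - s) * ?phi t + s * ?phi u"
      using convex_onD[OF cvx, of s "x + t *\<^sub>R e" "x + u *\<^sub>R e"] \<open>0 < s\<close> \<open>s < 1\<close> by simp
  qed simp
  have d: "(?phi has_field_derivative (e \<bullet> gradf x)) (at 0 within UNIV)"
    using line_deriv[OF grad, of x e 0] by simp
  have "?phi 1 - ?phi 0 \<ge> (e \<bullet> gradf x) * (1 - 0)"
    by (rule convex_on_imp_above_tangent[OF c _ _ _ d]) auto
  then show ?thesis by (simp add: inner_commute)
qed

lemma descent:
  fixes f :: "real^'n \<Rightarrow> real"
  assumes grad: "\<And>y. GDERIV f y :> gradf y"
    and lip: "\<And>y z. norm (gradf y - gradf z) \<le> L * norm (y - z)"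
    and t: "0 \<le> t"
  shows "f (x + t *\<^sub>R d) \<le> f x + t * (gradf x \<bullet> d) + L / 2 * t\<^sup>2 * (norm d)\<^sup>2"
proof -
  define h where "h s = f (x + s *\<^sub>R d) - s * (gradf x \<bullet> d) - L / 2 * s\<^sup>2 * (norm d)\<^sup>2" for s
  have "h t \<le> h 0"
  proof (rule DERIV_nonpos_imp_nonincreasing[OF t])
    fix s assume s: "0 \<le> s" "s \<le> t"
    have D: "(h has_real_derivative (d \<bullet> gradf (x + s *\<^sub>R d) - gradf x \<bullet> d - L / 2 * (2 * s) * (norm d)\<^sup>2)) (at s)"
      unfolding h_def
      by (rule derivative_eq_intros line_deriv[OF grad] | simp)+
    have "d \<bullet> gradf (x + s *\<^sub>R d) - gradf x \<bullet> d = (gradf (x + s *\<^sub>R d) - gradf x) \<bullet> d"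
      by (simp add: inner_diff_left inner_diff_right inner_commute)
    also have "\<dots> \<le> norm (gradf (x + s *\<^sub>R d) - gradf x) * norm d" by (rule norm_cauchy_schwarz)
    also have "\<dots> \<le> (L * norm (s *\<^sub>R d)) * norm d"
      using lip[of "x + s *\<^sub>R d" x] by (intro mult_right_mono) auto
    also have "\<dots> = L / 2 * (2 * s) * (norm d)\<^sup>2" using s by (simp add: power2_eq_square)
    finally show "\<exists>y. DERIV h s :> y \<and> y \<le> 0" using D by (intro exI[of _ "d \<bullet> gradf (x + s *\<^sub>R d) - gradf x \<bullet> d - L / 2 * (2 * s) * (norm d)\<^sup>2"]) auto
  qed
  then show ?thesis by (simp add: h_def)
qed


lemma key_real:
  fixes \<eta> a2 s q :: real
  assumes eta: "0 \<le> \<eta>" "\<eta> < 1" and a2: "0 \<le> a2" and q0: "q \<le> 0"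
    and sq: "- s \<le> (1 - \<eta>) * q"
    and seg: "\<And>t. 0 \<le> t \<Longrightarrow> t \<le> 1 \<Longrightarrow> q \<le> - t * s - 1/2 * t * (1 - t) * a2"
  shows "a2 / (1 + sqrt \<eta>) \<le> s + a2 / 2"
proof (cases "\<eta> = 0")
  case True
  have s0: "0 \<le> s" using sq q0 True by simp
  have "a2 \<le> 2 * s"
  proof (rule ccontr)
    assume "\<not> a2 \<le> 2 * s"
    then have lt: "2 * s < a2" by simp
    define t where "t = (2 * s / a2 + 1) / 2"
    have a2p: "a2 > 0" using lt s0 by simp
    have r: "2 * s / a2 < 1" using lt a2p by (simp add: field_simps)
    have r0: "0 \<le> 2 * s / a2" using s0 a2p by simp
    have t01: "0 \<le> t" "t < 1" "2 * s / a2 < t" using r r0 unfolding t_def by auto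
    have "-s \<le> - t * s - 1/2 * t * (1 - t) * a2" using seg[of t] t01 sq True by simp
    then have "(1 - t) * s \<ge> (1 - t) * (1/2 * t * a2)" by (simp add: algebra_simps)
    then have "s \<ge> 1/2 * t * a2" using t01 by simp
    moreover have "t * a2 > 2 * s" using t01(3) a2p by (simp add: field_simps)
    ultimately show False by simp
  qed
  then show ?thesis using True by simp
next
  case False
  define r where "r = sqrt \<eta>"
  have r: "0 < r" "r < 1" "r\<^sup>2 = \<eta>" using False eta unfolding r_def by (auto simp: real_sqrt_lt_1_iff)
  define t where "t = 1 / (1 + r)"
  have t01: "0 \<le> t" "t \<le> 1" using r unfolding t_def by auto
  have "- s \<le> (1 - \<eta>) * (- t * s - 1/2 * t * (1 - t) * a2)"
    using sq mult_left_mono[OF seg[OF t01], of "1 - \<eta>"] eta by linarith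
  moreover have "(1 - \<eta>) * t = 1 - r" using r unfolding t_def
    by (simp add: field_simps power2_eq_square)
  moreover have "1 - t = r / (1 + r)" using r unfolding t_def by (simp add: field_simps)
  moreover have "(1 - \<eta>) * (- t * s - 1/2 * t * (1 - t) * a2) = - ((1 - \<eta>) * t) * s - 1/2 * ((1 - \<eta>) * t) * (1 - t) * a2"
    by (simp add: algebra_simps)
  ultimately have "- s \<le> - (1 - r) * s - 1/2 * (1 - r) * (r / (1 + r)) * a2"
    by simp
  then have "r * s \<ge> r * (1/2 * (1 - r) / (1 + r) * a2)" by (simp add: algebra_simps)
  then have "s \<ge> 1/2 * (1 - r) / (1 + r) * a2" using r(1) mult_le_cancel_left_pos by blast
  moreover have "a2 / (1 + r) = 1/2 * (1 - r) / (1 + r) * a2 + a2 / 2" using r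
    by (simp add: field_simps)
  ultimately show ?thesis unfolding r_def by linarith
qed

lemma alpha_bound:
  fixes \<alpha> \<beta> \<gamma> \<eta> \<sigma> L D nd2 :: real
  assumes beta: "0 < \<beta>" "\<beta> < 1" and gamma: "0 < \<gamma>" "\<gamma> < 1" and eta: "0 \<le> \<eta>" "\<eta> < 1"
    and L: "L > 0" and sig: "\<sigma> > 0" and nd2: "0 \<le> nd2"
    and a: "\<alpha> = \<beta> ^ i"
    and D: "\<sigma> * nd2 / (1 + sqrt \<eta>) \<le> D"
    and fail: "i > 0 \<Longrightarrow> (1 - \<gamma>) * D < L / 2 * \<beta> ^ (i - 1) * nd2"
  shows "min (1 - \<eta>) (2 * (1 - sqrt \<eta>) * \<beta> * (1 - \<gamma>) * \<sigma> / L) \<le> \<alpha> * (1 - \<eta>)"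
proof (cases "i = 0")
  case True then show ?thesis using a by simp
next
  case False
  define r where "r = sqrt \<eta>"
  have r: "0 \<le> r" "r < 1" "r\<^sup>2 = \<eta>" using eta unfolding r_def by (auto simp: real_sqrt_lt_1_iff)
  define b where "b = \<beta> ^ (i - 1)"
  have ab: "\<alpha> = \<beta> * b" using False a unfolding b_def by (metis Suc_pred' neq0_conv power_Suc)
  have b0: "b > 0" using beta unfolding b_def by simp
  have "(1 - \<gamma>) * (\<sigma> * nd2 / (1 + r)) \<le> (1 - \<gamma>) * D"
    using D gamma unfolding r_def by (intro mult_left_mono) auto
  also have "\<dots> < L / 2 * b * nd2" using fail False unfolding b_def by simp
  finally have 1: "((1 - \<gamma>) * \<sigma> / (1 + r)) * nd2 < (L / 2 * b) * nd2" by (simp add: field_simps)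
  then have "nd2 > 0" using nd2 gamma sig r
    by (metis less_eq_real_def mult_eq_0_iff not_less zero_less_mult_iff)
  with 1 have "(1 - \<gamma>) * \<sigma> / (1 + r) < L / 2 * b" using mult_less_cancel_right_pos by blast
  then have "2 * (1 - \<gamma>) * \<sigma> < L * b * (1 + r)" using r by (simp add: field_simps)
  then have "2 * (1 - r) * \<beta> * (1 - \<gamma>) * \<sigma> < (1 - r) * \<beta> * (L * b * (1 + r))"
  proof -
    have p: "0 < (1 - r) * \<beta>" using r beta by simp
    from mult_strict_left_mono[OF \<open>2 * (1 - \<gamma>) * \<sigma> < L * b * (1 + r)\<close> p]
    show ?thesis by (simp add: algebra_simps)
  qed
  also have "\<dots> = L * (\<alpha> * (1 - \<eta>))" using ab r by (simp add: algebra_simps power2_eq_square)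
  finally have "2 * (1 - r) * \<beta> * (1 - \<gamma>) * \<sigma> / L < \<alpha> * (1 - \<eta>)" using L by (simp add: field_simps)
  then show ?thesis unfolding r_def by linarith
qed

lemma ratio_real:
  fixes num den K :: real
  assumes "0 \<le> den" "num \<le> den * (1 - K)" "K \<le> 1"
  shows "num / den \<le> 1 - K"
  using assms by (cases "den = 0") (auto simp: divide_le_eq mult_ac)



lemma step:
  fixes f :: "real^'n \<Rightarrow> real" and gradf :: "real^'n \<Rightarrow> real^'n"
    and \<psi> :: "real^'n \<Rightarrow> ereal" and F :: "real^'n \<Rightarrow> ereal"
    and L \<mu> \<sigma> M \<beta> \<gamma> \<eta> \<alpha> :: real and x d :: "real^'n" and H :: "real^'n^'n"
  assumes F_def: "F = Fobj f \<psi>"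
    and grad: "\<And>y. GDERIV f y :> gradf y"
    and L_pos: "L > 0"
    and lip: "\<And>y z. norm (gradf y - gradf z) \<le> L * norm (y - z)"
    and psi_convex: "ext_convex \<psi>" and psi_proper: "ext_proper \<psi>"
    and F_bdd: "Fstar F \<noteq> -\<infinity>"
    and f_convex: "convex_on UNIV f"
    and mu_pos: "\<mu> > 0" and osc: "opt_set_strongly_convex \<mu> F"
    and beta: "0 < \<beta>" "\<beta> < 1" and gamma: "0 < \<gamma>" "\<gamma> < 1"
    and eta: "0 \<le> \<eta>" "\<eta> < 1"
    and sigma_pos: "\<sigma> > 0" and sigma_M: "\<sigma> \<le> M"
    and x_dom: "\<psi> x \<noteq> \<infinity>"
    and H_sym: "transpose H = H"
    and H_bounds: "loewner_between \<sigma> H M"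
    and d_inexact: "inexact \<eta> (Qmod (gradf x) \<psi> x H) d"
    and linesearch: "\<exists>i. \<alpha> = \<beta> ^ i
        \<and> F (x + \<beta> ^ i *\<^sub>R d) \<le> F x + ereal (\<beta> ^ i * \<gamma>) *
             (ereal (gradf x \<bullet> d) + \<psi> (x + d) - \<psi> x)
        \<and> (\<forall>j<i. \<not> (F (x + \<beta> ^ j *\<^sub>R d) \<le> F x + ereal (\<beta> ^ j * \<gamma>) *
             (ereal (gradf x \<bullet> d) + \<psi> (x + d) - \<psi> x)))"
  shows "\<psi> (x + \<alpha> *\<^sub>R d) \<noteq> \<infinity>
    \<and> (real_of_ereal (F (x + \<alpha> *\<^sub>R d) - Fstar F) / real_of_ereal (F x - Fstar F)
              \<le> 1 - \<alpha> * \<gamma> * (1 - \<eta>) * \<mu> / (\<mu> + spec_norm H)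
           \<and> 1 - \<alpha> * \<gamma> * (1 - \<eta>) * \<mu> / (\<mu> + spec_norm H)
              \<le> 1 - \<gamma> * \<mu> / (\<mu> + M) * min (1 - \<eta>) (2 * (1 - sqrt \<eta>) * \<beta> * (1 - \<gamma>) * \<sigma> / L))
    \<and> (F x - Fstar F \<ge> ereal ((x - closest_point (OptSet F) x) \<bullet>
                 (H *v (x - closest_point (OptSet F) x)))
        \<longrightarrow> real_of_ereal (F (x + \<alpha> *\<^sub>R d) - Fstar F) / real_of_ereal (F x - Fstar F)
              \<le> 1 - (1 - \<eta>) * \<gamma> * \<alpha> / 2
          \<and> 1 - (1 - \<eta>) * \<gamma> * \<alpha> / 2
              \<le> 1 - \<gamma> / 2 * min (1 - \<eta>) (2 * (1 - sqrt \<eta>) * \<beta> * (1 - \<gamma>) * \<sigma> / L))"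
proof -
  let ?g = "gradf x"
  let ?Q = "Qmod ?g \<psi> x H"
  have nminf: "\<psi> y \<noteq> -\<infinity>" for y using psi_proper unfolding ext_proper_def by auto
  obtain px where px: "\<psi> x = ereal px" using x_dom nminf[of x] by (cases "\<psi> x") auto
  have Fval: "\<psi> y = ereal p \<Longrightarrow> F y = ereal (f y + p)" for y p by (simp add: F_def Fobj_def)
  have Fx: "F x = ereal (f x + px)" using Fval[OF px] .
  have Fst_le: "Fstar F \<le> F y" for y unfolding Fstar_def by (rule Inf_lower) auto
  obtain fs where fs: "Fstar F = ereal fs" using F_bdd Fst_le[of x] Fx by (cases "Fstar F") auto
  have Qe: "\<psi> (x + e) = ereal p \<Longrightarrow> ?Q e = ereal (?g \<bullet> e + 1/2 * (e \<bullet> (H *v e)) + p - px)" for e p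
    by (simp add: Qmod_def px)
  have Qinf: "\<psi> (x + e) = \<infinity> \<Longrightarrow> ?Q e = \<infinity>" for e by (simp add: Qmod_def px)
  have Q0: "?Q 0 = 0" by (simp add: Qmod_def px)
  have Qst_le: "Inf (range ?Q) \<le> ?Q e" for e by (rule Inf_lower) auto
  have Qd_le: "?Q d \<le> ereal (1 - \<eta>) * Inf (range ?Q)" using d_inexact unfolding inexact_def .
  have Qd_fin: "?Q d \<noteq> -\<infinity>"
    using Qe[of d] Qinf[of d] nminf[of "x + d"] by (cases "\<psi> (x + d)") auto
  have "Inf (range ?Q) \<noteq> -\<infinity>"
  proof
    assume "Inf (range ?Q) = -\<infinity>"
    then have "?Q d \<le> -\<infinity>" using Qd_le eta by simp
    then show False using Qd_fin by simp
  qed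
  moreover have "Inf (range ?Q) \<le> 0" using Qst_le[of 0] Q0 by simp
  ultimately obtain q where q: "Inf (range ?Q) = ereal q" and q0: "q \<le> 0"
    by (cases "Inf (range ?Q)") auto
  have "\<psi> (x + d) \<noteq> \<infinity>" using Qd_le Qinf[of d] q by auto
  then obtain pd where pd: "\<psi> (x + d) = ereal pd" using nminf[of "x + d"] by (cases "\<psi> (x + d)") auto
  have Qlow: "\<psi> (x + e) = ereal p \<Longrightarrow> q \<le> ?g \<bullet> e + 1/2 * (e \<bullet> (H *v e)) + p - px" for e p
    using Qst_le[of e] Qe[of e p] q by simp
  define a2 where "a2 = d \<bullet> (H *v d)"
  define \<Delta> where "\<Delta> = ?g \<bullet> d + pd - px"
  have Qdr: "?g \<bullet> d + 1/2 * a2 + pd - px \<le> (1 - \<eta>) * q"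
    using Qd_le Qe[OF pd] q unfolding a2_def by simp
  have psd: "\<sigma> * (norm v)\<^sup>2 \<le> v \<bullet> (H *v v)" "v \<bullet> (H *v v) \<le> M * (norm v)\<^sup>2" for v
    using H_bounds unfolding loewner_between_def by auto
  have a2_ge: "\<sigma> * (norm d)\<^sup>2 \<le> a2" unfolding a2_def by (rule psd)
  have a20: "0 \<le> a2" using a2_ge sigma_pos by (meson order_trans mult_nonneg_nonneg less_imp_le zero_le_power2)
  have seg: "\<exists>p. \<psi> (x + t *\<^sub>R d) = ereal p \<and> p \<le> (1 - t) * px + t * pd" if t: "0 \<le> t" "t \<le> 1" for t
  proof -
    have "\<psi> ((1 - t) *\<^sub>R x + t *\<^sub>R (x + d)) \<le> ereal (1 - t) * \<psi> x + ereal t * \<psi> (x + d)"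
      using psi_convex t unfolding ext_convex_def by blast
    moreover have "(1 - t) *\<^sub>R x + t *\<^sub>R (x + d) = x + t *\<^sub>R d" by (simp add: algebra_simps)
    ultimately have le: "\<psi> (x + t *\<^sub>R d) \<le> ereal ((1 - t) * px + t * pd)" using px pd by simp
    then obtain p where "\<psi> (x + t *\<^sub>R d) = ereal p" using nminf[of "x + t *\<^sub>R d"]
      by (cases "\<psi> (x + t *\<^sub>R d)") auto
    with le show ?thesis by auto
  qed
  have keyD: "\<sigma> * (norm d)\<^sup>2 / (1 + sqrt \<eta>) \<le> - \<Delta>"
  proof -
    define s where "s = - (?g \<bullet> d + 1/2 * a2 + pd - px)"
    have "a2 / (1 + sqrt \<eta>) \<le> s + a2 / 2"
    proof (rule key_real[OF eta a20 q0])
      show "- s \<le> (1 - \<eta>) * q" using Qdr unfolding s_def by simp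
      fix t :: real assume t: "0 \<le> t" "t \<le> 1"
      obtain p where p: "\<psi> (x + t *\<^sub>R d) = ereal p" "p \<le> (1 - t) * px + t * pd" using seg[OF t] by blast
      have "q \<le> ?g \<bullet> (t *\<^sub>R d) + 1/2 * ((t *\<^sub>R d) \<bullet> (H *v (t *\<^sub>R d))) + p - px" by (rule Qlow[OF p(1)])
      also have "\<dots> = t * (?g \<bullet> d) + 1/2 * t\<^sup>2 * a2 + p - px"
        by (simp add: a2_def matrix_vector_mult_scaleR power2_eq_square)
      also have "\<dots> \<le> t * (?g \<bullet> d) + 1/2 * t\<^sup>2 * a2 + t * (pd - px)" using p(2) by (simp add: algebra_simps)
      also have "\<dots> = - t * s - 1/2 * t * (1 - t) * a2" unfolding s_def by (simp add: field_simps power2_eq_square)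
      finally show "q \<le> - t * s - 1/2 * t * (1 - t) * a2" .
    qed
    moreover have "s + a2 / 2 = - \<Delta>" unfolding s_def \<Delta>_def by simp
    moreover have "\<sigma> * (norm d)\<^sup>2 / (1 + sqrt \<eta>) \<le> a2 / (1 + sqrt \<eta>)"
      using a2_ge eta by (intro divide_right_mono) auto
    ultimately show ?thesis by linarith
  qed
  have Fdesc: "F (x + t *\<^sub>R d) \<le> ereal (f x + px + t * \<Delta> + L / 2 * t\<^sup>2 * (norm d)\<^sup>2)" if t: "0 \<le> t" "t \<le> 1" for t
  proof -
    obtain p where p: "\<psi> (x + t *\<^sub>R d) = ereal p" "p \<le> (1 - t) * px + t * pd" using seg[OF t] by blast
    have "f (x + t *\<^sub>R d) \<le> f x + t * (?g \<bullet> d) + L / 2 * t\<^sup>2 * (norm d)\<^sup>2" by (rule descent[OF grad lip t(1)])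
    then show ?thesis using Fval[OF p(1)] p(2) unfolding \<Delta>_def by (simp add: algebra_simps)
  qed
  have Arm_rhs: "F x + ereal (c * \<gamma>) * (ereal (?g \<bullet> d) + \<psi> (x + d) - \<psi> x) = ereal (f x + px + c * \<gamma> * \<Delta>)" for c
    using Fx px pd unfolding \<Delta>_def by simp
  obtain i where i: "\<alpha> = \<beta> ^ i" and acc: "F (x + \<beta> ^ i *\<^sub>R d) \<le> ereal (f x + px + \<beta> ^ i * \<gamma> * \<Delta>)"
    and fail: "\<And>j. j < i \<Longrightarrow> \<not> (F (x + \<beta> ^ j *\<^sub>R d) \<le> ereal (f x + px + \<beta> ^ j * \<gamma> * \<Delta>))"
    using linesearch unfolding Arm_rhs by blast
  have a01: "0 < \<alpha>" "\<alpha> \<le> 1" using i beta by (auto simp: power_le_one)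
  have abound: "min (1 - \<eta>) (2 * (1 - sqrt \<eta>) * \<beta> * (1 - \<gamma>) * \<sigma> / L) \<le> \<alpha> * (1 - \<eta>)"
  proof (rule alpha_bound[OF beta gamma eta L_pos sigma_pos _ i keyD])
    show "0 \<le> (norm d)\<^sup>2" by simp
    assume "0 < i"
    define t where "t = \<beta> ^ (i - 1)"
    have t: "0 \<le> t" "t \<le> 1" using beta unfolding t_def by (auto simp: power_le_one)
    have "\<not> (F (x + t *\<^sub>R d) \<le> ereal (f x + px + t * \<gamma> * \<Delta>))" using fail[of "i - 1"] \<open>0 < i\<close> unfolding t_def by simp
    then have "f x + px + t * \<gamma> * \<Delta> < f x + px + t * \<Delta> + L / 2 * t\<^sup>2 * (norm d)\<^sup>2"
      using Fdesc[OF t] by (meson ereal_less_eq(3) not_le order_trans)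
    then have "t * ((1 - \<gamma>) * (- \<Delta>)) < t * (L / 2 * t * (norm d)\<^sup>2)" by (simp add: algebra_simps power2_eq_square)
    then have "(1 - \<gamma>) * (- \<Delta>) < L / 2 * t * (norm d)\<^sup>2" using t(1) mult_less_cancel_left by fastforce
    then show "(1 - \<gamma>) * (- \<Delta>) < L / 2 * \<beta> ^ (i - 1) * (norm d)\<^sup>2" unfolding t_def .
  qed
  have accF: "F (x + \<alpha> *\<^sub>R d) \<le> ereal (f x + px + \<alpha> * \<gamma> * \<Delta>)" using acc i by simp
  have "\<psi> (x + \<alpha> *\<^sub>R d) \<noteq> \<infinity>"
  proof
    assume "\<psi> (x + \<alpha> *\<^sub>R d) = \<infinity>"
    then have "F (x + \<alpha> *\<^sub>R d) = \<infinity>" by (simp add: F_def Fobj_def)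
    then show False using accF by simp
  qed
  then obtain pn where pn: "\<psi> (x + \<alpha> *\<^sub>R d) = ereal pn" using nminf by (cases "\<psi> (x + \<alpha> *\<^sub>R d)") auto
  define num where "num = f (x + \<alpha> *\<^sub>R d) + pn - fs"
  define den where "den = f x + px - fs"
  have num_eq: "real_of_ereal (F (x + \<alpha> *\<^sub>R d) - Fstar F) = num" unfolding num_def using Fval[OF pn] fs by simp
  have den_eq: "real_of_ereal (F x - Fstar F) = den" unfolding den_def using Fx fs by simp
  have den0: "0 \<le> den" using Fst_le[of x] Fx fs unfolding den_def by simp
  have num_le: "num \<le> den + \<alpha> * \<gamma> * \<Delta>" using accF Fval[OF pn] unfolding num_def den_def by simp
  have Dq: "\<Delta> \<le> (1 - \<eta>) * q" using Qdr a20 unfolding \<Delta>_def by simp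
  have agq: "\<alpha> * \<gamma> * \<Delta> \<le> \<alpha> * \<gamma> * ((1 - \<eta>) * q)" using Dq a01 gamma by (intro mult_left_mono) auto
  define nH where "nH = spec_norm H"
  have nH0: "0 \<le> nH" unfolding nH_def by (rule spec_nonneg)
  have nHM: "nH \<le> M" unfolding nH_def by (rule spec_le_M[OF H_sym H_bounds sigma_pos])
  let ?p = "closest_point (OptSet F) x"
  have rate1: "q \<le> - (\<mu> / (\<mu> + nH)) * den"
  proof -
    define l where "l = nH / (\<mu> + nH)"
    have l01: "0 \<le> l" "l \<le> 1" "1 - l = \<mu> / (\<mu> + nH)" using nH0 mu_pos unfolding l_def by (auto simp: field_simps)
    define y where "y = l *\<^sub>R x + (1 - l) *\<^sub>R ?p"
    define N where "N = (norm (x - ?p))\<^sup>2"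
    have "F y \<le> ereal l * F x + ereal (1 - l) * Fstar F - ereal (\<mu> * l * (1 - l) / 2 * N)"
      using osc l01 unfolding opt_set_strongly_convex_def y_def N_def Let_def by blast
    then have Fy: "F y \<le> ereal (l * (f x + px) + (1 - l) * fs - \<mu> * l * (1 - l) / 2 * N)" using Fx fs by simp
    have "\<psi> y \<noteq> \<infinity>"
    proof
      assume "\<psi> y = \<infinity>" then have "F y = \<infinity>" by (simp add: F_def Fobj_def)
      then show False using Fy by simp
    qed
    then obtain py where py: "\<psi> y = ereal py" using nminf[of y] by (cases "\<psi> y") auto
    define e where "e = y - x"
    have xe: "x + e = y" unfolding e_def by simp
    have e_eq: "e = (1 - l) *\<^sub>R (?p - x)" unfolding e_def y_def by (simp add: algebra_simps)
    have "norm e = (1 - l) * norm (x - ?p)" unfolding e_eq using l01(2)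
      by (simp add: norm_minus_commute)
    then have ne: "(norm e)\<^sup>2 = (1 - l)\<^sup>2 * N" unfolding N_def by (simp add: power_mult_distrib)
    have "q \<le> ?g \<bullet> e + 1/2 * (e \<bullet> (H *v e)) + py - px" using Qlow[of e py] py xe by simp
    also have "?g \<bullet> e \<le> f y - f x" using grad_ineq[OF grad f_convex, of x e] xe by simp
    also have "e \<bullet> (H *v e) \<le> nH * (norm e)\<^sup>2" using quad_le_spec[of e H] unfolding nH_def by linarith
    finally have A1: "q \<le> f y - f x + 1/2 * (nH * (1 - l)\<^sup>2 * N) + py - px" unfolding ne by (simp add: mult_ac)
    have A2: "f y + py \<le> l * (f x + px) + (1 - l) * fs - \<mu> * l * (1 - l) / 2 * N" using Fy Fval[OF py] by simp
    have A3: "l * (f x + px) + (1 - l) * fs - \<mu> * l * (1 - l) / 2 * N - f x + 1/2 * (nH * (1 - l)\<^sup>2 * N) - px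
       = - (1 - l) * den + (1 - l) / 2 * N * ((1 - l) * nH - \<mu> * l)"
      unfolding den_def by (simp add: field_simps power2_eq_square)
    have "q \<le> - (1 - l) * den + (1 - l) / 2 * N * ((1 - l) * nH - \<mu> * l)"
      using A1 A2 A3 by linarith
    moreover have X1: "(1 - l) * nH - \<mu> * l = \<mu> / (\<mu> + nH) * nH - \<mu> * l" by (simp only: l01(3))
    moreover have X2: "\<mu> / (\<mu> + nH) * nH - \<mu> * l = 0" unfolding l_def by simp
    ultimately have "q \<le> - (1 - l) * den" by simp
    then show ?thesis by (simp only: l01(3))
  qed
  have rate2: "q \<le> - den / 2"
    if cond: "F x - Fstar F \<ge> ereal ((x - ?p) \<bullet> (H *v (x - ?p)))"
  proof -
    have o: "\<And>y l. 0 \<le> l \<Longrightarrow> l \<le> 1 \<Longrightarrow> F (l *\<^sub>R y + (1 - l) *\<^sub>R closest_point (OptSet F) y)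
        \<le> ereal l * F y + ereal (1 - l) * Fstar F - ereal (\<mu> * l * (1 - l) / 2 * (norm (y - closest_point (OptSet F) y))\<^sup>2)"
      using osc unfolding opt_set_strongly_convex_def Let_def by blast
    have Fp: "F ?p \<le> ereal fs" using o[of 0 x] fs by (simp add: zero_ereal_def[symmetric])
    have "\<psi> ?p \<noteq> \<infinity>"
    proof
      assume "\<psi> ?p = \<infinity>" then have "F ?p = \<infinity>" by (simp add: F_def Fobj_def)
      then show False using Fp by simp
    qed
    then obtain pp where pp: "\<psi> ?p = ereal pp" using nminf[of ?p] by (cases "\<psi> ?p") auto
    define e where "e = ?p - x"
    have xe: "x + e = ?p" unfolding e_def by simp
    have eHe: "e \<bullet> (H *v e) = (x - ?p) \<bullet> (H *v (x - ?p))"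
    proof -
      have ee: "e = (-1) *\<^sub>R (x - ?p)" unfolding e_def by simp
      have "((-1) *\<^sub>R v) \<bullet> (H *v ((-1) *\<^sub>R v)) = v \<bullet> (H *v v)" for v
        by (simp only: matrix_vector_mult_scaleR inner_scaleR_left inner_scaleR_right mult_minus1 minus_minus)
      then show ?thesis unfolding ee .
    qed
    have c: "(x - ?p) \<bullet> (H *v (x - ?p)) \<le> den" using cond Fx fs unfolding den_def by simp
    have "q \<le> ?g \<bullet> e + 1/2 * (e \<bullet> (H *v e)) + pp - px" using Qlow[of e pp] pp xe by simp
    also have "?g \<bullet> e \<le> f ?p - f x" using grad_ineq[OF grad f_convex, of x e] xe by simp
    finally have B1: "q \<le> f ?p + pp - (f x + px) + 1/2 * (e \<bullet> (H *v e))" by simp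
    have B2: "f ?p + pp \<le> fs" using Fp Fval[OF pp] by simp
    have B3: "1/2 * (e \<bullet> (H *v e)) \<le> 1/2 * den" using c eHe by simp
    have B4: "- den / 2 = fs - (f x + px) + 1/2 * den" unfolding den_def by (simp add: field_simps)
    show ?thesis unfolding B4 using B1 B2 B3 by linarith
  qed
  have K1le: "\<alpha> * \<gamma> * (1 - \<eta>) * \<mu> / (\<mu> + nH) \<le> 1"
  proof -
    have "\<alpha> * \<gamma> * (1 - \<eta>) \<le> 1 * 1 * 1" using a01 gamma eta by (intro mult_mono) auto
    moreover have "\<mu> / (\<mu> + nH) \<le> 1" using nH0 mu_pos by simp
    moreover have "0 \<le> \<mu> / (\<mu> + nH)" using nH0 mu_pos by simp
    moreover have "0 \<le> \<alpha> * \<gamma> * (1 - \<eta>)" using a01 gamma eta by simp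
    ultimately show ?thesis using mult_mono[of "\<alpha> * \<gamma> * (1 - \<eta>)" 1 "\<mu> / (\<mu> + nH)" 1] by simp
  qed
  have part1: "num / den \<le> 1 - \<alpha> * \<gamma> * (1 - \<eta>) * \<mu> / (\<mu> + nH)"
  proof (rule ratio_real[OF den0 _ K1le])
    have "\<alpha> * \<gamma> * ((1 - \<eta>) * q) \<le> \<alpha> * \<gamma> * ((1 - \<eta>) * (- (\<mu> / (\<mu> + nH)) * den))"
      using rate1 a01 gamma eta by (intro mult_left_mono) auto
    then show "num \<le> den * (1 - \<alpha> * \<gamma> * (1 - \<eta>) * \<mu> / (\<mu> + nH))"
      using num_le agq by (simp add: algebra_simps)
  qed
  have chain1: "1 - \<alpha> * \<gamma> * (1 - \<eta>) * \<mu> / (\<mu> + nH)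
      \<le> 1 - \<gamma> * \<mu> / (\<mu> + M) * min (1 - \<eta>) (2 * (1 - sqrt \<eta>) * \<beta> * (1 - \<gamma>) * \<sigma> / L)"
  proof -
    let ?m = "min (1 - \<eta>) (2 * (1 - sqrt \<eta>) * \<beta> * (1 - \<gamma>) * \<sigma> / L)"
    have "\<gamma> * \<mu> / (\<mu> + M) * ?m \<le> \<gamma> * \<mu> / (\<mu> + M) * (\<alpha> * (1 - \<eta>))"
      using abound gamma mu_pos nH0 nHM by (intro mult_left_mono) auto
    also have "\<dots> \<le> \<gamma> * \<mu> * (\<alpha> * (1 - \<eta>)) / (\<mu> + nH)"
    proof -
      have "0 \<le> \<gamma> * \<mu> * (\<alpha> * (1 - \<eta>))" using gamma mu_pos a01 eta by simp
      then have "\<gamma> * \<mu> * (\<alpha> * (1 - \<eta>)) / (\<mu> + M) \<le> \<gamma> * \<mu> * (\<alpha> * (1 - \<eta>)) / (\<mu> + nH)"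
        using nH0 nHM mu_pos by (intro divide_left_mono) auto
      then show ?thesis by simp
    qed
    finally show ?thesis by (simp add: mult_ac)
  qed
  have part2: "num / den \<le> 1 - (1 - \<eta>) * \<gamma> * \<alpha> / 2"
    if cond: "F x - Fstar F \<ge> ereal ((x - ?p) \<bullet> (H *v (x - ?p)))"
  proof (rule ratio_real[OF den0])
    show "(1 - \<eta>) * \<gamma> * \<alpha> / 2 \<le> 1"
    proof -
      have "(1 - \<eta>) * \<gamma> * \<alpha> \<le> 1 * 1 * 1" using a01 gamma eta by (intro mult_mono) auto
      then show ?thesis by simp
    qed
    have "\<alpha> * \<gamma> * ((1 - \<eta>) * q) \<le> \<alpha> * \<gamma> * ((1 - \<eta>) * (- den / 2))"
      using rate2[OF cond] a01 gamma eta by (intro mult_left_mono) auto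
    then show "num \<le> den * (1 - (1 - \<eta>) * \<gamma> * \<alpha> / 2)"
      using num_le agq by (simp add: algebra_simps)
  qed
  have chain2: "1 - (1 - \<eta>) * \<gamma> * \<alpha> / 2
              \<le> 1 - \<gamma> / 2 * min (1 - \<eta>) (2 * (1 - sqrt \<eta>) * \<beta> * (1 - \<gamma>) * \<sigma> / L)"
    using mult_left_mono[OF abound, of "\<gamma> / 2"] gamma by (simp add: mult_ac)
  show ?thesis
    using \<open>\<psi> (x + \<alpha> *\<^sub>R d) \<noteq> \<infinity>\<close> part1 chain1 part2 chain2
    unfolding num_eq den_eq nH_def by blast
qed



theorem theorem2:
  fixes f :: "real^'n \<Rightarrow> real" and gradf :: "real^'n \<Rightarrow> real^'n"
    and \<psi> :: "real^'n \<Rightarrow> ereal"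
    and L \<mu> \<sigma> M \<beta> \<gamma> \<eta> :: real
    and x d :: "nat \<Rightarrow> real^'n" and H :: "nat \<Rightarrow> real^'n^'n" and \<alpha> :: "nat \<Rightarrow> real"
  defines "F \<equiv> Fobj f \<psi>"
  assumes grad: "\<And>y. GDERIV f y :> gradf y"
    and L_pos: "L > 0"
    and lip: "\<And>y z. norm (gradf y - gradf z) \<le> L * norm (y - z)"
    and psi_convex: "ext_convex \<psi>" and psi_proper: "ext_proper \<psi>" and psi_closed: "ext_closed \<psi>"
    and F_bdd: "Fstar F \<noteq> -\<infinity>"
    and Omega_ne: "OptSet F \<noteq> {}"
    and f_convex: "convex_on UNIV f"
    and mu_pos: "\<mu> > 0" and osc: "opt_set_strongly_convex \<mu> F"
    and beta: "0 < \<beta>" "\<beta> < 1" and gamma: "0 < \<gamma>" "\<gamma> < 1"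
    and eta: "0 \<le> \<eta>" "\<eta> < 1"
    and sigma_pos: "\<sigma> > 0" and sigma_M: "\<sigma> \<le> M"
    and x0_dom: "\<psi> (x 0) \<noteq> \<infinity>"
    and H_sym: "\<And>k. transpose (H k) = H k"
    and H_bounds: "\<And>k. loewner_between \<sigma> (H k) M"
    and Q_sc: "\<And>k. ext_strongly_convex (Qmod (gradf (x k)) \<psi> (x k) (H k))"
    and d_inexact: "\<And>k. inexact \<eta> (Qmod (gradf (x k)) \<psi> (x k) (H k)) (d k)"
    and linesearch: "\<And>k. \<exists>i. \<alpha> k = \<beta> ^ i
        \<and> F (x k + \<beta> ^ i *\<^sub>R d k) \<le> F (x k) + ereal (\<beta> ^ i * \<gamma>) *
             (ereal (gradf (x k) \<bullet> d k) + \<psi> (x k + d k) - \<psi> (x k))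
        \<and> (\<forall>j<i. \<not> (F (x k + \<beta> ^ j *\<^sub>R d k) \<le> F (x k) + ereal (\<beta> ^ j * \<gamma>) *
             (ereal (gradf (x k) \<bullet> d k) + \<psi> (x k + d k) - \<psi> (x k))))"
    and update: "\<And>k. x (Suc k) = x k + \<alpha> k *\<^sub>R d k"
  shows "(\<forall>k. real_of_ereal (F (x (Suc k)) - Fstar F) / real_of_ereal (F (x k) - Fstar F)
              \<le> 1 - \<alpha> k * \<gamma> * (1 - \<eta>) * \<mu> / (\<mu> + spec_norm (H k))
           \<and> 1 - \<alpha> k * \<gamma> * (1 - \<eta>) * \<mu> / (\<mu> + spec_norm (H k))
              \<le> 1 - \<gamma> * \<mu> / (\<mu> + M) * min (1 - \<eta>) (2 * (1 - sqrt \<eta>) * \<beta> * (1 - \<gamma>) * \<sigma> / L))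
    \<and> (\<forall>k. F (x k) - Fstar F \<ge> ereal ((x k - closest_point (OptSet F) (x k)) \<bullet>
                 (H k *v (x k - closest_point (OptSet F) (x k))))
        \<longrightarrow> real_of_ereal (F (x (Suc k)) - Fstar F) / real_of_ereal (F (x k) - Fstar F)
              \<le> 1 - (1 - \<eta>) * \<gamma> * \<alpha> k / 2
          \<and> 1 - (1 - \<eta>) * \<gamma> * \<alpha> k / 2
              \<le> 1 - \<gamma> / 2 * min (1 - \<eta>) (2 * (1 - sqrt \<eta>) * \<beta> * (1 - \<gamma>) * \<sigma> / L))"
proof -
  have step_k: "\<psi> (x (Suc k)) \<noteq> \<infinity>
    \<and> (real_of_ereal (F (x (Suc k)) - Fstar F) / real_of_ereal (F (x k) - Fstar F)
              \<le> 1 - \<alpha> k * \<gamma> * (1 - \<eta>) * \<mu> / (\<mu> + spec_norm (H k))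
           \<and> 1 - \<alpha> k * \<gamma> * (1 - \<eta>) * \<mu> / (\<mu> + spec_norm (H k))
              \<le> 1 - \<gamma> * \<mu> / (\<mu> + M) * min (1 - \<eta>) (2 * (1 - sqrt \<eta>) * \<beta> * (1 - \<gamma>) * \<sigma> / L))
    \<and> (F (x k) - Fstar F \<ge> ereal ((x k - closest_point (OptSet F) (x k)) \<bullet>
                 (H k *v (x k - closest_point (OptSet F) (x k))))
        \<longrightarrow> real_of_ereal (F (x (Suc k)) - Fstar F) / real_of_ereal (F (x k) - Fstar F)
              \<le> 1 - (1 - \<eta>) * \<gamma> * \<alpha> k / 2
          \<and> 1 - (1 - \<eta>) * \<gamma> * \<alpha> k / 2
              \<le> 1 - \<gamma> / 2 * min (1 - \<eta>) (2 * (1 - sqrt \<eta>) * \<beta> * (1 - \<gamma>) * \<sigma> / L))"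
    if dom: "\<psi> (x k) \<noteq> \<infinity>" for k
    unfolding update
    by (rule step[OF meta_eq_to_obj_eq[OF F_def] grad L_pos lip psi_convex psi_proper F_bdd f_convex mu_pos osc
          beta gamma eta sigma_pos sigma_M dom H_sym[of k] H_bounds[of k] d_inexact[of k] linesearch[of k]])
  have dom: "\<psi> (x k) \<noteq> \<infinity>" for k
  proof (induction k)
    case 0 show ?case by (rule x0_dom)
  next
    case (Suc k) then show ?case using step_k by blast
  qed
  show ?thesis using step_k[OF dom] by blast
qed

end
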